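(* For all nonnegative integers $n$ and $r$ with $n\geqslant\lceil r/2\rceil+1$, $$m\!\left(K_n^2, r\right)=\left\lfloor\frac{(r+1)^2}{4}\right\rfloor.$$
   Context: All graphs are finite, simple and undirected. For a nonnegative integer $r$ and a graph $G$, the $r$-neighbor bootstrap percolation process on $G$ starts with a set $A_0\subseteq V(G)$ of initially active vertices, and for $i\geqslant 1$, $A_i=A_{i-1}\cup\{v\in V(G) : |N(v)\cap A_{i-1}|\geqslant r\}$, where $N(v)$ is the set of neighbors of $v$. The set $A_0$ is a percolating set if $\bigcup_{i\geqslant 0}A_i=V(G)$. $m(G,r)$ denotes the minimum size of a percolating set of $G$ in the $r$-neighbor bootstrap percolation process. $K_n^2=K_n\square K_n$ is the graph with vertex set $\{0,\ldots,n-1\}^2$ in which two vertices are adjacent iff they differ in exactly one coordinate. *)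

theory Defs
  imports Main
begin

text \<open>A finite simple graph is given by a vertex set V and a symmetric irreflexive
adjacency relation E. Neighbourhood of v is {u \<in> V. E v u}.\<close>

definition nbhd :: "'a set \<Rightarrow> ('a \<Rightarrow> 'a \<Rightarrow> bool) \<Rightarrow> 'a \<Rightarrow> 'a set" where
  "nbhd V E v = {u \<in> V. E v u}"

fun bp_step :: "'a set \<Rightarrow> ('a \<Rightarrow> 'a \<Rightarrow> bool) \<Rightarrow> nat \<Rightarrow> 'a set \<Rightarrow> nat \<Rightarrow> 'a set" where
  "bp_step V E r A 0 = A"
| "bp_step V E r A (Suc i) =
     bp_step V E r A i \<union> {v \<in> V. card (nbhd V E v \<inter> bp_step V E r A i) \<ge> r}"

definition percolating :: "'a set \<Rightarrow> ('a \<Rightarrow> 'a \<Rightarrow> bool) \<Rightarrow> nat \<Rightarrow> 'a set \<Rightarrow> bool" where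
  "percolating V E r A \<longleftrightarrow> A \<subseteq> V \<and> (\<Union>i. bp_step V E r A i) = V"

text \<open>m(G,r): minimum size of a percolating set (V itself always percolates for finite V).\<close>
definition m_perc :: "'a set \<Rightarrow> ('a \<Rightarrow> 'a \<Rightarrow> bool) \<Rightarrow> nat \<Rightarrow> nat" where
  "m_perc V E r = Min {card A | A. percolating V E r A}"

definition Kn2_V :: "nat \<Rightarrow> (nat \<times> nat) set" where
  "Kn2_V n = {0..<n} \<times> {0..<n}"

definition Kn2_E :: "(nat \<times> nat) \<Rightarrow> (nat \<times> nat) \<Rightarrow> bool" where
  "Kn2_E x y \<longleftrightarrow> (fst x = fst y \<and> snd x \<noteq> snd y) \<or> (fst x \<noteq> fst y \<and> snd x = snd y)"

end

theory Submission imports Defs begin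

lemma bp_step_Suc_mono: "bp_step V E r A i \<subseteq> bp_step V E r A (Suc i)"
  by auto

lemma bp_step_mono:
  assumes "i \<le> j" shows "bp_step V E r A i \<subseteq> bp_step V E r A j"
  using lift_Suc_mono_le[of "bp_step V E r A", OF bp_step_Suc_mono assms] .

lemma bp_step_subset: "A \<subseteq> V \<Longrightarrow> bp_step V E r A i \<subseteq> V"
  by (induction i) auto

lemma finite_in_step:
  assumes "finite X" "X \<subseteq> (\<Union>i. bp_step V E r A i)"
  shows "\<exists>m. X \<subseteq> bp_step V E r A m"
  using assms
proof (induction X rule: finite_induct)
  case empty then show ?case by auto
next
  case (insert x X)
  then obtain m1 where m1: "X \<subseteq> bp_step V E r A m1" by auto
  from insert obtain m2 where m2: "x \<in> bp_step V E r A m2" by auto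
  have "X \<subseteq> bp_step V E r A (max m1 m2)" using m1 bp_step_mono[of m1 "max m1 m2" V E r A] by auto
  moreover have "x \<in> bp_step V E r A (max m1 m2)" using m2 bp_step_mono[of m2 "max m1 m2" V E r A] by auto
  ultimately show ?case by blast
qed

lemma closure_rule:
  assumes "finite V" "v \<in> V" "r \<le> card (nbhd V E v \<inter> (\<Union>i. bp_step V E r A i))"
  shows "v \<in> (\<Union>i. bp_step V E r A i)"
proof -
  let ?X = "nbhd V E v \<inter> (\<Union>i. bp_step V E r A i)"
  have fin: "finite (nbhd V E v)" using assms(1) unfolding nbhd_def by auto
  then have "finite ?X" by auto
  then obtain m where m: "?X \<subseteq> bp_step V E r A m" using finite_in_step[of ?X V E r A] by auto
  have "?X \<subseteq> nbhd V E v \<inter> bp_step V E r A m" using m by auto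
  then have "card ?X \<le> card (nbhd V E v \<inter> bp_step V E r A m)"
    using fin by (intro card_mono) auto
  then have "v \<in> bp_step V E r A (Suc m)" using assms by auto
  then show ?thesis by blast
qed


lemma stuck_exists:
  assumes "percolating V E r F" "F \<noteq> V"
  shows "\<exists>v \<in> V - F. r \<le> card (nbhd V E v \<inter> F)"
proof (rule ccontr)
  assume H: "\<not> ?thesis"
  have "bp_step V E r F i = F" for i
  proof (induction i)
    case 0 then show ?case by simp
  next
    case (Suc i)
    then show ?case using H by auto
  qed
  then have "(\<Union>i. bp_step V E r F i) = F" by simp
  then show False using assms unfolding percolating_def by simp
qed

lemma delete_lemma:
  assumes fin: "finite V" and perc: "percolating V E (Suc r) F"
    and D: "\<forall>v \<in> V - D. card (nbhd V E v \<inter> D) \<le> 1"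
  shows "percolating (V - D) E r (F - D)"
proof -
  have FV: "F \<subseteq> V" using perc unfolding percolating_def by simp
  have key: "bp_step V E (Suc r) F t - D \<subseteq> bp_step (V - D) E r (F - D) t" for t
  proof (induction t)
    case 0 then show ?case by simp
  next
    case (Suc t)
    show ?case
    proof
      fix v assume v: "v \<in> bp_step V E (Suc r) F (Suc t) - D"
      show "v \<in> bp_step (V - D) E r (F - D) (Suc t)"
      proof (cases "v \<in> bp_step V E (Suc r) F t")
        case True
        then show ?thesis using v Suc by auto
      next
        case False
        let ?X = "nbhd V E v \<inter> bp_step V E (Suc r) F t"
        have vV: "v \<in> V" and cX: "Suc r \<le> card ?X" using v False by auto
        have finX: "finite ?X" using fin unfolding nbhd_def by auto
        have "card (?X \<inter> D) \<le> card (nbhd V E v \<inter> D)"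
          using fin unfolding nbhd_def by (intro card_mono) auto
        also have "\<dots> \<le> 1" using D vV v by auto
        finally have c1: "card (?X \<inter> D) \<le> 1" .
        have "card (?X - D) = card ?X - card (?X \<inter> D)"
          using finX by (intro card_Diff_subset_Int) auto
        then have c2: "r \<le> card (?X - D)" using cX c1 by simp
        have sub: "?X - D \<subseteq> nbhd (V - D) E v \<inter> bp_step (V - D) E r (F - D) t"
          using Suc unfolding nbhd_def by auto
        have "card (?X - D) \<le> card (nbhd (V - D) E v \<inter> bp_step (V - D) E r (F - D) t)"
          using fin sub unfolding nbhd_def by (intro card_mono) auto
        then show ?thesis using c2 v vV by auto
      qed
    qed
  qed
  have "bp_step (V - D) E r (F - D) t \<subseteq> V - D" for t
    using FV by (intro bp_step_subset) auto
  moreover have "V - D \<subseteq> (\<Union>t. bp_step (V - D) E r (F - D) t)"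
  proof
    fix x assume x: "x \<in> V - D"
    then obtain t where "x \<in> bp_step V E (Suc r) F t" using perc unfolding percolating_def by auto
    then show "x \<in> (\<Union>t. bp_step (V - D) E r (F - D) t)" using key x by blast
  qed
  ultimately show ?thesis unfolding percolating_def using FV by blast
qed


lemma line_col:
  "\<forall>v \<in> P \<times> Q - {u \<in> P \<times> Q. snd u = j}. card (nbhd (P \<times> Q) Kn2_E v \<inter> {u \<in> P \<times> Q. snd u = j}) \<le> 1"
proof
  fix v assume v: "v \<in> P \<times> Q - {u \<in> P \<times> Q. snd u = j}"
  have "nbhd (P \<times> Q) Kn2_E v \<inter> {u \<in> P \<times> Q. snd u = j} \<subseteq> {(fst v, j)}"
    using v unfolding nbhd_def Kn2_E_def by auto
  then have "card (nbhd (P \<times> Q) Kn2_E v \<inter> {u \<in> P \<times> Q. snd u = j}) \<le> card {(fst v, j)}"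
    by (intro card_mono) auto
  then show "card (nbhd (P \<times> Q) Kn2_E v \<inter> {u \<in> P \<times> Q. snd u = j}) \<le> 1" by simp
qed

lemma line_row:
  "\<forall>v \<in> P \<times> Q - {u \<in> P \<times> Q. fst u = i}. card (nbhd (P \<times> Q) Kn2_E v \<inter> {u \<in> P \<times> Q. fst u = i}) \<le> 1"
proof
  fix v assume v: "v \<in> P \<times> Q - {u \<in> P \<times> Q. fst u = i}"
  have "nbhd (P \<times> Q) Kn2_E v \<inter> {u \<in> P \<times> Q. fst u = i} \<subseteq> {(i, snd v)}"
    using v unfolding nbhd_def Kn2_E_def by auto
  then have "card (nbhd (P \<times> Q) Kn2_E v \<inter> {u \<in> P \<times> Q. fst u = i}) \<le> card {(i, snd v)}"
    by (intro card_mono) auto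
  then show "card (nbhd (P \<times> Q) Kn2_E v \<inter> {u \<in> P \<times> Q. fst u = i}) \<le> 1" by simp
qed

lemma LB:
  "\<And>P Q F k. finite P \<Longrightarrow> finite Q \<Longrightarrow> percolating (P \<times> Q) Kn2_E r F \<Longrightarrow>
     k \<le> card P \<Longrightarrow> r + 1 - k \<le> card Q \<Longrightarrow> k * (r + 1 - k) \<le> card F"
proof (induction r)
  case 0
  then show ?case by (cases k) auto
next
  case (Suc r P Q F k)
  note IH = Suc.IH
  have FV: "F \<subseteq> P \<times> Q" using Suc.prems(3) unfolding percolating_def by simp
  have finV: "finite (P \<times> Q)" using Suc.prems by auto
  have finF: "finite F" using FV finV finite_subset by blast
  show ?case
  proof (cases "k = 0 \<or> Suc r + 1 \<le> k")
    case True
    then show ?thesis by auto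
  next
    case False
    then have k1: "1 \<le> k" and kr: "k \<le> Suc r" by auto
    show ?thesis
    proof (cases "F = P \<times> Q")
      case True
      then have "card F = card P * card Q" by (simp add: card_cartesian_product)
      then show ?thesis using Suc.prems(4,5) mult_le_mono by metis
    next
      case False
      then obtain v where v: "v \<in> P \<times> Q - F" "Suc r \<le> card (nbhd (P \<times> Q) Kn2_E v \<inter> F)"
        using stuck_exists[OF Suc.prems(3)] by blast
      obtain i j where ij: "v = (i, j)" by (cases v)
      have iP: "i \<in> P" and jQ: "j \<in> Q" using v ij by auto
      define Rw where "Rw = {u \<in> P \<times> Q. fst u = i}"
      define Cl where "Cl = {u \<in> P \<times> Q. snd u = j}"
      have "nbhd (P \<times> Q) Kn2_E v \<inter> F \<subseteq> (F \<inter> Rw) \<union> (F \<inter> Cl)"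
        using FV ij unfolding nbhd_def Kn2_E_def Rw_def Cl_def by auto
      then have "card (nbhd (P \<times> Q) Kn2_E v \<inter> F) \<le> card ((F \<inter> Rw) \<union> (F \<inter> Cl))"
        using finF by (intro card_mono) auto
      also have "\<dots> \<le> card (F \<inter> Rw) + card (F \<inter> Cl)" by (rule card_Un_le)
      finally have sum: "Suc r \<le> card (F \<inter> Rw) + card (F \<inter> Cl)" using v by linarith
      have cardF: "card F = card (F - D) + card (F \<inter> D)" for D
        using finF by (metis card_Diff_subset_Int finite_Int Int_lower1 card_mono le_add_diff_inverse add.commute
              Int_commute)
      show ?thesis
      proof (cases "k \<le> card (F \<inter> Cl)")
        case True
        have eqV: "P \<times> Q - Cl = P \<times> (Q - {j})" unfolding Cl_def by auto
        have perc': "percolating (P \<times> (Q - {j})) Kn2_E r (F - Cl)"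
          using delete_lemma[OF finV Suc.prems(3) line_col[of P Q j]] eqV unfolding Cl_def by simp
        have cQ: "card (Q - {j}) = card Q - 1" using jQ Suc.prems(2) by simp
        have "k * (r + 1 - k) \<le> card (F - Cl)"
          using IH[OF Suc.prems(1) _ perc' Suc.prems(4)] Suc.prems(2,5) cQ by simp
        moreover have "k * (Suc r + 1 - k) = k * (r + 1 - k) + k"
        proof -
          have "Suc r + 1 - k = Suc (r + 1 - k)" using kr by simp
          then show ?thesis by simp
        qed
        ultimately show ?thesis using cardF[of Cl] True by linarith
      next
        case False
        then have cR: "Suc r + 1 - k \<le> card (F \<inter> Rw)" using sum k1 by linarith
        have eqV: "P \<times> Q - Rw = (P - {i}) \<times> Q" unfolding Rw_def by auto
        have perc': "percolating ((P - {i}) \<times> Q) Kn2_E r (F - Rw)"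
          using delete_lemma[OF finV Suc.prems(3) line_row[of P Q i]] eqV unfolding Rw_def by simp
        have cP: "card (P - {i}) = card P - 1" using iP Suc.prems(1) by simp
        have e: "r + 1 - (k - 1) = Suc r + 1 - k" using k1 kr by simp
        have "(k - 1) * (r + 1 - (k - 1)) \<le> card (F - Rw)"
          using IH[of "P - {i}" Q "F - Rw" "k - 1"] perc' Suc.prems(1,2,4,5) cP e by simp
        then have "(k - 1) * (Suc r + 1 - k) \<le> card (F - Rw)" using e by simp
        moreover have "k * (Suc r + 1 - k) = (k - 1) * (Suc r + 1 - k) + (Suc r + 1 - k)"
        proof -
          obtain k0 where "k = Suc k0" using k1 by (cases k) auto
          then show ?thesis by simp
        qed
        ultimately show ?thesis using cardF[of Rw] cR by linarith
      qed
    qed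
  qed
qed


lemma arith_count:
  fixes n r k k' i j :: nat
  assumes "r = k + k'" "k' \<le> k" "k \<le> k' + 1" "k + 1 \<le> n" "i < n" "j < n"
    "\<not> i + j < k" "\<not> 2 * n \<le> i + j + 1 + k'"
  shows "r \<le> (n - Suc j) + min j (k - i) + i + (n - max (Suc i) (2 * n - (j + 1 + k')))"
  using assms by (simp add: min_def max_def split: if_splits) arith?


definition stair :: "nat \<Rightarrow> (nat \<times> nat) set" where
  "stair k = {p. fst p + snd p < k}"

lemma stair_Suc: "stair (Suc k) = stair k \<union> (\<lambda>i. (i, k - i)) ` {0..k}"
  unfolding stair_def by (auto simp: image_iff)

lemma stair_card: "finite (stair k) \<and> 2 * card (stair k) = k * (k + 1)"
proof (induction k)
  case 0 then show ?case by (simp add: stair_def)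
next
  case (Suc k)
  have inj: "inj_on (\<lambda>i. (i, k - i)) {0..k}" by (auto simp: inj_on_def)
  have disj: "stair k \<inter> (\<lambda>i. (i, k - i)) ` {0..k} = {}" unfolding stair_def by auto
  have c: "card ((\<lambda>i. (i, k - i)) ` {0..k}) = k + 1" using card_image[OF inj] by simp
  have "card (stair (Suc k)) = card (stair k) + (k + 1)"
    unfolding stair_Suc using Suc.IH disj c by (subst card_Un_disjoint) auto
  then show ?case using Suc.IH stair_Suc by auto
qed


lemma f_val:
  fixes r :: nat
  shows "(r + 1)^2 div 4 = ((r+1) div 2) * (r + 1 - (r+1) div 2)"
    and "2 * ((r + 1)^2 div 4) = ((r+1) div 2) * ((r+1) div 2 + 1) + (r div 2) * (r div 2 + 1)"
proof -
  obtain m where "r = 2 * m \<or> r = 2 * m + 1" by (metis dvd_mult_div_cancel odd_two_times_div_two_succ oddE)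
  then consider (e) "r = 2 * m" | (o) "r = 2 * m + 1" by blast
  then have "(r + 1)^2 div 4 = ((r+1) div 2) * (r + 1 - (r+1) div 2) \<and>
    2 * ((r + 1)^2 div 4) = ((r+1) div 2) * ((r+1) div 2 + 1) + (r div 2) * (r div 2 + 1)"
  proof cases
    case e
    have "(r+1)^2 = 4 * (m*m+m) + 1" using e by (simp add: power2_eq_square algebra_simps)
    then have "(r+1)^2 div 4 = m*m+m" by simp
    moreover have "(r+1) div 2 = m" "r div 2 = m" using e by auto
    ultimately show ?thesis using e by (simp add: algebra_simps)
  next
    case o
    have "(r+1)^2 = 4 * ((m+1)*(m+1))" using o by (simp add: power2_eq_square algebra_simps)
    then have "(r+1)^2 div 4 = (m+1)*(m+1)" by simp
    moreover have "(r+1) div 2 = m + 1" "r div 2 = m" using o by auto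
    ultimately show ?thesis using o by (simp add: algebra_simps)
  qed
  then show "(r + 1)^2 div 4 = ((r+1) div 2) * (r + 1 - (r+1) div 2)"
    and "2 * ((r + 1)^2 div 4) = ((r+1) div 2) * ((r+1) div 2 + 1) + (r div 2) * (r div 2 + 1)"
    by auto
qed


lemma UB:
  fixes n r :: nat
  assumes n: "(r + 1) div 2 + 1 \<le> n"
  shows "\<exists>F. percolating (Kn2_V n) Kn2_E r F \<and> card F = (r + 1)^2 div 4"
proof -
  define k where "k = (r + 1) div 2"
  define k' where "k' = r div 2"
  define V where "V = Kn2_V n"
  have rk: "r = k + k'" "k' \<le> k" "k \<le> k' + 1" "k + 1 \<le> n" using n unfolding k_def k'_def by auto
  define F where "F = {p \<in> V. fst p + snd p < k \<or> 2 * n \<le> fst p + snd p + 1 + k'}"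
  define B where "B = {p \<in> V. 2 * n \<le> fst p + snd p + 1 + k'}"
  have finV: "finite V" unfolding V_def Kn2_V_def by auto
  have FV: "F \<subseteq> V" unfolding F_def by auto
  have TF: "stair k \<subseteq> V" using rk unfolding stair_def V_def Kn2_V_def by auto
  have Fu: "F = stair k \<union> B" using TF unfolding F_def B_def stair_def by auto
  have disj: "stair k \<inter> B = {}" using rk unfolding B_def stair_def by auto
  define \<phi> where "\<phi> = (\<lambda>p::nat \<times> nat. (n - 1 - fst p, n - 1 - snd p))"
  have Bim: "B = \<phi> ` stair k'"
  proof
    show "B \<subseteq> \<phi> ` stair k'"
    proof
      fix p assume p: "p \<in> B"
      obtain i j where ij: "p = (i, j)" by (cases p)
      have "i < n" "j < n" "2 * n \<le> i + j + 1 + k'" using p ij unfolding B_def V_def Kn2_V_def by auto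
      then have "(n - 1 - i, n - 1 - j) \<in> stair k'" "\<phi> (n - 1 - i, n - 1 - j) = p"
        unfolding stair_def \<phi>_def ij by auto
      then show "p \<in> \<phi> ` stair k'" by blast
    qed
  next
    show "\<phi> ` stair k' \<subseteq> B"
      using rk unfolding B_def stair_def \<phi>_def V_def Kn2_V_def by auto
  qed
  have inj: "inj_on \<phi> (stair k')"
    using rk unfolding inj_on_def stair_def \<phi>_def by auto
  have cB: "card B = card (stair k')" using Bim card_image[OF inj] by simp
  have "card F = card (stair k) + card B"
    unfolding Fu using finV TF disj Fu FV by (intro card_Un_disjoint) (auto intro: finite_subset)
  then have "2 * card F = k * (k + 1) + k' * (k' + 1)"
    using stair_card[of k] stair_card[of k'] cB by simp
  then have cardF: "card F = (r + 1)^2 div 4" using f_val(2)[of r] unfolding k_def k'_def by simp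
  let ?cl = "\<Union>t. bp_step V Kn2_E r F t"
  have Fcl: "F \<subseteq> ?cl"
  proof
    fix x assume "x \<in> F"
    then have "x \<in> bp_step V Kn2_E r F 0" by simp
    then show "x \<in> ?cl" by blast
  qed
  have main: "\<forall>i j. i < n \<longrightarrow> j < n \<longrightarrow> i + n - j = d \<longrightarrow> (i, j) \<in> ?cl" for d
  proof (induction d rule: less_induct)
    case (less d)
    show ?case
    proof (intro allI impI)
      fix i j assume i: "i < n" and j: "j < n" and d: "i + n - j = d"
      show "(i, j) \<in> ?cl"
      proof (cases "(i, j) \<in> F")
        case True then show ?thesis using Fcl by blast
      next
        case False
        have c1: "\<not> i + j < k" "\<not> 2 * n \<le> i + j + 1 + k'" using False i j
          unfolding F_def V_def Kn2_V_def by auto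
        define Y where "Y = {j<..<n} \<union> {..<min j (k - i)}"
        define X where "X = {..<i} \<union> {max (Suc i) (2 * n - (j + 1 + k'))..<n}"
        define S where "S = (\<lambda>y. (i, y)) ` Y \<union> (\<lambda>x. (x, j)) ` X"
        have cY: "card Y = (n - Suc j) + min j (k - i)"
          unfolding Y_def by (subst card_Un_disjoint) auto
        have cX: "card X = i + (n - max (Suc i) (2 * n - (j + 1 + k')))"
          unfolding X_def by (subst card_Un_disjoint) auto
        have "card S = card ((\<lambda>y. (i, y)) ` Y) + card ((\<lambda>x. (x, j)) ` X)"
          unfolding S_def
        proof (rule card_Un_disjoint)
          show "finite ((\<lambda>y. (i, y)) ` Y)" unfolding Y_def by auto
          show "finite ((\<lambda>x. (x, j)) ` X)" unfolding X_def by auto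
          show "(\<lambda>y. (i, y)) ` Y \<inter> (\<lambda>x. (x, j)) ` X = {}" unfolding X_def Y_def by auto
        qed
        also have "\<dots> = card Y + card X"
          by (subst card_image, simp add: inj_on_def)+ simp
        finally have cS: "r \<le> card S"
          using cX cY arith_count[OF rk i j c1] by linarith
        have "S \<subseteq> nbhd V Kn2_E (i, j) \<inter> ?cl"
        proof
          fix p assume p: "p \<in> S"
          show "p \<in> nbhd V Kn2_E (i, j) \<inter> ?cl"
          proof (cases "p \<in> (\<lambda>y. (i, y)) ` Y")
            case True
            then obtain y where y: "y \<in> Y" "p = (i, y)" by auto
            have "y < j \<or> y < n" using y unfolding Y_def by auto
            then have yn: "y < n" using j by linarith
            have nb: "p \<in> nbhd V Kn2_E (i, j)"
              using y i j yn unfolding Y_def nbhd_def V_def Kn2_V_def Kn2_E_def by auto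
            show ?thesis
            proof (cases "y > j")
              case True
              have "y < n" using yn .
              then have "i + n - y < d" using True d j by linarith
              then have "(i, y) \<in> ?cl" using less.IH[of "i + n - y"] i \<open>y < n\<close> by blast
              then show ?thesis using nb y by auto
            next
              case False
              then have "y < k - i" using y unfolding Y_def by auto
              then have "p \<in> F" using y i j rk unfolding F_def V_def Kn2_V_def by auto
              then show ?thesis using nb Fcl by auto
            qed
          next
            case False
            then obtain x where x: "x \<in> X" "p = (x, j)" using p unfolding S_def by auto
            have nb: "p \<in> nbhd V Kn2_E (i, j)"
              using x i j unfolding X_def nbhd_def V_def Kn2_V_def Kn2_E_def by auto
            show ?thesis
            proof (cases "x < i")
              case True
              then have "x + n - j < d" using d j by linarith
              then have "(x, j) \<in> ?cl" using less.IH[of "x + n - j"] True i j by auto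
              then show ?thesis using nb x by auto
            next
              case False
              then have "x < n" "2 * n \<le> x + j + 1 + k'" using x unfolding X_def by auto
              then have "p \<in> F" using x j unfolding F_def V_def Kn2_V_def by auto
              then show ?thesis using nb Fcl by auto
            qed
          qed
        qed
        then have "card S \<le> card (nbhd V Kn2_E (i, j) \<inter> ?cl)"
          using finV unfolding nbhd_def by (intro card_mono) auto
        then have "r \<le> card (nbhd V Kn2_E (i, j) \<inter> ?cl)" using cS by linarith
        moreover have "(i, j) \<in> V" using i j unfolding V_def Kn2_V_def by auto
        ultimately show ?thesis using closure_rule[OF finV] by blast
      qed
    qed
  qed
  have "V \<subseteq> ?cl"
  proof
    fix p assume "p \<in> V"
    then obtain i j where "p = (i, j)" "i < n" "j < n" unfolding V_def Kn2_V_def by auto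
    then show "p \<in> ?cl" using main[of "i + n - j"] by auto
  qed
  moreover have "?cl \<subseteq> V" using bp_step_subset[OF FV] by blast
  ultimately have "percolating V Kn2_E r F" unfolding percolating_def using FV by blast
  then show ?thesis using cardF unfolding V_def by blast
qed


theorem theorem2p1:
  fixes n r :: nat
  assumes "n \<ge> (r + 1) div 2 + 1"
  shows "m_perc (Kn2_V n) Kn2_E r = (r + 1)^2 div 4"
proof -
  let ?S = "{card A |A. percolating (Kn2_V n) Kn2_E r A}"
  obtain F where F: "percolating (Kn2_V n) Kn2_E r F" "card F = (r + 1)^2 div 4"
    using UB[OF assms] by blast
  have fin: "finite ?S"
  proof (rule finite_subset)
    show "?S \<subseteq> card ` Pow (Kn2_V n)" unfolding percolating_def by auto
    show "finite (card ` Pow (Kn2_V n))" unfolding Kn2_V_def by auto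
  qed
  have lower: "(r + 1)^2 div 4 \<le> c" if cS: "c \<in> ?S" for c
  proof -
    obtain A where A0: "c = card A" "percolating (Kn2_V n) Kn2_E r A"
      using cS by blast
    have A: "c = card A" "percolating ({0..<n} \<times> {0..<n}) Kn2_E r A"
      using A0 unfolding Kn2_V_def by auto
    have "(r + 1) div 2 * (r + 1 - (r + 1) div 2) \<le> card A"
      using LB[OF _ _ A(2), of "(r + 1) div 2"] assms by simp
    then show ?thesis using f_val(1)[of r] A(1) by simp
  qed
  have "(r + 1)^2 div 4 \<in> ?S" using F by (metis (mono_tags, lifting) mem_Collect_eq)
  then show ?thesis unfolding m_perc_def using fin lower by (intro Min_eqI) auto
qed

end
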